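(* Let $\Lambda$ be a unital commutative ring, $q$ a non-negative integer, $\mathfrak g$ a Lie algebra over $\Lambda$ and $\mathfrak h$ an ideal of $\mathfrak g$. (i) There is a Lie algebra homomorphism $\xi^{\otimes}\colon\mathfrak h\otimes^q\mathfrak g\to\mathfrak g$ with $\xi^{\otimes}(h\otimes g)=[h,g]$ and (when $q\ge1$) $\xi^{\otimes}(\{h\})=qh$ for $h\in\mathfrak h$, $g\in\mathfrak g$; moreover $\xi^{\otimes}$ factors through the canonical projection $\mathfrak h\otimes^q\mathfrak g\to\mathfrak h\wedge^q\mathfrak g$, inducing a Lie homomorphism $\xi^{\wedge}\colon\mathfrak h\wedge^q\mathfrak g\to\mathfrak g$. (ii) For $q\ge1$: the images of $\xi^{\otimes}$ and $\xi^{\wedge}$ lie in $\mathfrak h$, and for every $x\in\mathfrak h\otimes^q\mathfrak g$ one has $\{\xi^{\otimes}(x)\}=qx$, and for every $x\in\mathfrak h\wedge^q\mathfrak g$ one has $\{\xi^{\wedge}(x)\}=qx$.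
   Context: All Lie algebras are over $\Lambda$. For $q\ge1$, the non-abelian $q$-tensor product $\mathfrak h\otimes^q\mathfrak g$ is the Lie algebra generated by symbols $h\otimes g$ and $\{h\}$ ($h\in\mathfrak h$, $g\in\mathfrak g$) subject to, for all $h,h'\in\mathfrak h$, $g,g'\in\mathfrak g$, $\lambda,\lambda'\in\Lambda$: (1) $\lambda(h\otimes g)=\lambda h\otimes g=h\otimes\lambda g$; (2) $(h+h')\otimes g=h\otimes g+h'\otimes g$; (3) $h\otimes(g+g')=h\otimes g+h\otimes g'$; (4) $[h,h']\otimes g=h\otimes[h',g]-h'\otimes[h,g]$; (5) $h\otimes[g,g']=[g',h]\otimes g-[g,h]\otimes g'$; (6) $[h\otimes g,h'\otimes g']=[h,g]\otimes[h',g']$; (7) $[\{h'\},h\otimes g]=[qh',h]\otimes g+h\otimes[qh',g]$; (8) $\{\lambda h+\lambda'h'\}=\lambda\{h\}+\lambda'\{h'\}$; (9) $[\{h\},\{h'\}]=qh\otimes qh'$; (10) $\{[h,g]\}=q(h\otimes g)$. For $q=0$, $\mathfrak h\otimes^0\mathfrak g$ is generated by the symbols $h\otimes g$ subject to (1)–(6) only (Ellis's non-abelian tensor product). The non-abelian $q$-exterior product $\mathfrak h\wedge^q\mathfrak g$ is the quotient of $\mathfrak h\otimes^q\mathfrak g$ by the relations $h\otimes h=0$, $h\in\mathfrak h$; images of generators are written $h\wedge g$ and $\{h\}$. *)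

theory Defs
  imports Main
begin

record ('r, 'a) lie_alg =
  lcarrier :: "'a set"
  lzero :: "'a"
  ladd :: "'a \<Rightarrow> 'a \<Rightarrow> 'a"
  lneg :: "'a \<Rightarrow> 'a"
  lsmul :: "'r \<Rightarrow> 'a \<Rightarrow> 'a"
  lbr :: "'a \<Rightarrow> 'a \<Rightarrow> 'a"

definition lie_algebra :: "('r::comm_ring_1, 'a) lie_alg \<Rightarrow> bool" where
  "lie_algebra L \<longleftrightarrow>
     (let C = lcarrier L; z = lzero L; ad = ladd L; ng = lneg L; sm = lsmul L; b = lbr L in
      z \<in> C \<and>
      (\<forall>x\<in>C. \<forall>y\<in>C. ad x y \<in> C) \<and> (\<forall>x\<in>C. ng x \<in> C) \<and>
      (\<forall>r. \<forall>x\<in>C. sm r x \<in> C) \<and> (\<forall>x\<in>C. \<forall>y\<in>C. b x y \<in> C) \<and>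
      (\<forall>x\<in>C. \<forall>y\<in>C. \<forall>w\<in>C. ad (ad x y) w = ad x (ad y w)) \<and>
      (\<forall>x\<in>C. \<forall>y\<in>C. ad x y = ad y x) \<and>
      (\<forall>x\<in>C. ad z x = x) \<and>
      (\<forall>x\<in>C. ad (ng x) x = z) \<and>
      (\<forall>r s. \<forall>x\<in>C. sm (r + s) x = ad (sm r x) (sm s x)) \<and>
      (\<forall>r. \<forall>x\<in>C. \<forall>y\<in>C. sm r (ad x y) = ad (sm r x) (sm r y)) \<and>
      (\<forall>r s. \<forall>x\<in>C. sm (r * s) x = sm r (sm s x)) \<and>
      (\<forall>x\<in>C. sm 1 x = x) \<and>
      (\<forall>x\<in>C. \<forall>y\<in>C. \<forall>w\<in>C. b (ad x y) w = ad (b x w) (b y w)) \<and>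
      (\<forall>x\<in>C. \<forall>y\<in>C. \<forall>w\<in>C. b x (ad y w) = ad (b x y) (b x w)) \<and>
      (\<forall>r. \<forall>x\<in>C. \<forall>y\<in>C. b (sm r x) y = sm r (b x y)) \<and>
      (\<forall>r. \<forall>x\<in>C. \<forall>y\<in>C. b x (sm r y) = sm r (b x y)) \<and>
      (\<forall>x\<in>C. b x x = z) \<and>
      (\<forall>x\<in>C. \<forall>y\<in>C. \<forall>w\<in>C. ad (ad (b x (b y w)) (b y (b w x))) (b w (b x y)) = z))"

definition lie_ideal :: "('r::comm_ring_1, 'a) lie_alg \<Rightarrow> 'a set \<Rightarrow> bool" where
  "lie_ideal L H \<longleftrightarrow> H \<subseteq> lcarrier L \<and> lzero L \<in> H \<and>
     (\<forall>x\<in>H. \<forall>y\<in>H. ladd L x y \<in> H) \<and> (\<forall>x\<in>H. lneg L x \<in> H) \<and>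
     (\<forall>r. \<forall>x\<in>H. lsmul L r x \<in> H) \<and>
     (\<forall>x\<in>H. \<forall>y\<in>lcarrier L. lbr L x y \<in> H)"

definition lie_hom :: "('r::comm_ring_1, 'a) lie_alg \<Rightarrow> ('r, 'b) lie_alg \<Rightarrow> ('a \<Rightarrow> 'b) \<Rightarrow> bool" where
  "lie_hom L M f \<longleftrightarrow> f ` lcarrier L \<subseteq> lcarrier M \<and>
     (\<forall>x\<in>lcarrier L. \<forall>y\<in>lcarrier L. f (ladd L x y) = ladd M (f x) (f y)) \<and>
     (\<forall>r. \<forall>x\<in>lcarrier L. f (lsmul L r x) = lsmul M r (f x)) \<and>
     (\<forall>x\<in>lcarrier L. \<forall>y\<in>lcarrier L. f (lbr L x y) = lbr M (f x) (f y))"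

text \<open>Formal Lie-algebra expressions in the generators h \<otimes> g (Tn h g) and
  {h} (Cu h).\<close>
datatype ('r, 'g) lterm =
    Tn 'g 'g | Cu 'g | LZero | LAdd "('r, 'g) lterm" "('r, 'g) lterm"
  | LNeg "('r, 'g) lterm" | LSmul 'r "('r, 'g) lterm" | LBr "('r, 'g) lterm" "('r, 'g) lterm"

fun wf_term :: "'g set \<Rightarrow> 'g set \<Rightarrow> nat \<Rightarrow> ('r, 'g) lterm \<Rightarrow> bool" where
  "wf_term H C q (Tn h g) = (h \<in> H \<and> g \<in> C)"
| "wf_term H C q (Cu h) = (h \<in> H \<and> 1 \<le> q)"
| "wf_term H C q LZero = True"
| "wf_term H C q (LAdd a b) = (wf_term H C q a \<and> wf_term H C q b)"
| "wf_term H C q (LNeg a) = wf_term H C q a"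
| "wf_term H C q (LSmul r a) = wf_term H C q a"
| "wf_term H C q (LBr a b) = (wf_term H C q a \<and> wf_term H C q b)"

abbreviation LSub where "LSub a b \<equiv> LAdd a (LNeg b)"

text \<open>The congruence generated by the Lie algebra axioms and relations (1)--(10)
  (relations (7)--(10) only when q >= 1); if ext is True, additionally
  h \<otimes> h = 0 (exterior product).\<close>
inductive teq :: "('r::comm_ring_1, 'g) lie_alg \<Rightarrow> 'g set \<Rightarrow> nat \<Rightarrow> bool
                  \<Rightarrow> ('r, 'g) lterm \<Rightarrow> ('r, 'g) lterm \<Rightarrow> bool"
  for G H q ext where
  refl: "wf_term H (lcarrier G) q a \<Longrightarrow> teq G H q ext a a"
| sym: "teq G H q ext a b \<Longrightarrow> teq G H q ext b a"
| trans: "teq G H q ext a b \<Longrightarrow> teq G H q ext b c \<Longrightarrow> teq G H q ext a c"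
| cong_add: "teq G H q ext a a' \<Longrightarrow> teq G H q ext b b' \<Longrightarrow> teq G H q ext (LAdd a b) (LAdd a' b')"
| cong_neg: "teq G H q ext a a' \<Longrightarrow> teq G H q ext (LNeg a) (LNeg a')"
| cong_smul: "teq G H q ext a a' \<Longrightarrow> teq G H q ext (LSmul r a) (LSmul r a')"
| cong_br: "teq G H q ext a a' \<Longrightarrow> teq G H q ext b b' \<Longrightarrow> teq G H q ext (LBr a b) (LBr a' b')"
| add_assoc: "wf_term H (lcarrier G) q a \<Longrightarrow> wf_term H (lcarrier G) q b \<Longrightarrow> wf_term H (lcarrier G) q c \<Longrightarrow>
     teq G H q ext (LAdd (LAdd a b) c) (LAdd a (LAdd b c))"
| add_comm: "wf_term H (lcarrier G) q a \<Longrightarrow> wf_term H (lcarrier G) q b \<Longrightarrow>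
     teq G H q ext (LAdd a b) (LAdd b a)"
| add_zero: "wf_term H (lcarrier G) q a \<Longrightarrow> teq G H q ext (LAdd LZero a) a"
| add_neg: "wf_term H (lcarrier G) q a \<Longrightarrow> teq G H q ext (LAdd (LNeg a) a) LZero"
| smul_add_scalar: "wf_term H (lcarrier G) q a \<Longrightarrow>
     teq G H q ext (LSmul (r + s) a) (LAdd (LSmul r a) (LSmul s a))"
| smul_add: "wf_term H (lcarrier G) q a \<Longrightarrow> wf_term H (lcarrier G) q b \<Longrightarrow>
     teq G H q ext (LSmul r (LAdd a b)) (LAdd (LSmul r a) (LSmul r b))"
| smul_mult: "wf_term H (lcarrier G) q a \<Longrightarrow> teq G H q ext (LSmul (r * s) a) (LSmul r (LSmul s a))"
| smul_one: "wf_term H (lcarrier G) q a \<Longrightarrow> teq G H q ext (LSmul 1 a) a"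
| br_add_left: "wf_term H (lcarrier G) q a \<Longrightarrow> wf_term H (lcarrier G) q b \<Longrightarrow> wf_term H (lcarrier G) q c \<Longrightarrow>
     teq G H q ext (LBr (LAdd a b) c) (LAdd (LBr a c) (LBr b c))"
| br_add_right: "wf_term H (lcarrier G) q a \<Longrightarrow> wf_term H (lcarrier G) q b \<Longrightarrow> wf_term H (lcarrier G) q c \<Longrightarrow>
     teq G H q ext (LBr a (LAdd b c)) (LAdd (LBr a b) (LBr a c))"
| br_smul_left: "wf_term H (lcarrier G) q a \<Longrightarrow> wf_term H (lcarrier G) q b \<Longrightarrow>
     teq G H q ext (LBr (LSmul r a) b) (LSmul r (LBr a b))"
| br_smul_right: "wf_term H (lcarrier G) q a \<Longrightarrow> wf_term H (lcarrier G) q b \<Longrightarrow>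
     teq G H q ext (LBr a (LSmul r b)) (LSmul r (LBr a b))"
| br_alt: "wf_term H (lcarrier G) q a \<Longrightarrow> teq G H q ext (LBr a a) LZero"
| jacobi: "wf_term H (lcarrier G) q a \<Longrightarrow> wf_term H (lcarrier G) q b \<Longrightarrow> wf_term H (lcarrier G) q c \<Longrightarrow>
     teq G H q ext (LAdd (LAdd (LBr a (LBr b c)) (LBr b (LBr c a))) (LBr c (LBr a b))) LZero"
| rel1a: "h \<in> H \<Longrightarrow> g \<in> lcarrier G \<Longrightarrow> teq G H q ext (LSmul r (Tn h g)) (Tn (lsmul G r h) g)"
| rel1b: "h \<in> H \<Longrightarrow> g \<in> lcarrier G \<Longrightarrow> teq G H q ext (LSmul r (Tn h g)) (Tn h (lsmul G r g))"
| rel2: "h \<in> H \<Longrightarrow> h' \<in> H \<Longrightarrow> g \<in> lcarrier G \<Longrightarrow>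
     teq G H q ext (Tn (ladd G h h') g) (LAdd (Tn h g) (Tn h' g))"
| rel3: "h \<in> H \<Longrightarrow> g \<in> lcarrier G \<Longrightarrow> g' \<in> lcarrier G \<Longrightarrow>
     teq G H q ext (Tn h (ladd G g g')) (LAdd (Tn h g) (Tn h g'))"
| rel4: "h \<in> H \<Longrightarrow> h' \<in> H \<Longrightarrow> g \<in> lcarrier G \<Longrightarrow>
     teq G H q ext (Tn (lbr G h h') g) (LSub (Tn h (lbr G h' g)) (Tn h' (lbr G h g)))"
| rel5: "h \<in> H \<Longrightarrow> g \<in> lcarrier G \<Longrightarrow> g' \<in> lcarrier G \<Longrightarrow>
     teq G H q ext (Tn h (lbr G g g')) (LSub (Tn (lbr G g' h) g) (Tn (lbr G g h) g'))"
| rel6: "h \<in> H \<Longrightarrow> h' \<in> H \<Longrightarrow> g \<in> lcarrier G \<Longrightarrow> g' \<in> lcarrier G \<Longrightarrow>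
     teq G H q ext (LBr (Tn h g) (Tn h' g')) (Tn (lbr G h g) (lbr G h' g'))"
| rel7: "1 \<le> q \<Longrightarrow> h \<in> H \<Longrightarrow> h' \<in> H \<Longrightarrow> g \<in> lcarrier G \<Longrightarrow>
     teq G H q ext (LBr (Cu h') (Tn h g))
       (LAdd (Tn (lbr G (lsmul G (of_nat q) h') h) g) (Tn h (lbr G (lsmul G (of_nat q) h') g)))"
| rel8: "1 \<le> q \<Longrightarrow> h \<in> H \<Longrightarrow> h' \<in> H \<Longrightarrow>
     teq G H q ext (Cu (ladd G (lsmul G r h) (lsmul G s h'))) (LAdd (LSmul r (Cu h)) (LSmul s (Cu h')))"
| rel9: "1 \<le> q \<Longrightarrow> h \<in> H \<Longrightarrow> h' \<in> H \<Longrightarrow>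
     teq G H q ext (LBr (Cu h) (Cu h')) (Tn (lsmul G (of_nat q) h) (lsmul G (of_nat q) h'))"
| rel10: "1 \<le> q \<Longrightarrow> h \<in> H \<Longrightarrow> g \<in> lcarrier G \<Longrightarrow>
     teq G H q ext (Cu (lbr G h g)) (LSmul (of_nat q) (Tn h g))"
| rel_ext: "ext \<Longrightarrow> h \<in> H \<Longrightarrow> teq G H q ext (Tn h h) LZero"

definition tcls :: "('r::comm_ring_1, 'g) lie_alg \<Rightarrow> 'g set \<Rightarrow> nat \<Rightarrow> bool
                    \<Rightarrow> ('r, 'g) lterm \<Rightarrow> ('r, 'g) lterm set" where
  "tcls G H q ext t = {s. teq G H q ext s t}"

definition trep :: "('r, 'g) lterm set \<Rightarrow> ('r, 'g) lterm" where
  "trep X = (SOME t. t \<in> X)"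

definition pres_alg :: "('r::comm_ring_1, 'g) lie_alg \<Rightarrow> 'g set \<Rightarrow> nat \<Rightarrow> bool
                        \<Rightarrow> ('r, ('r, 'g) lterm set) lie_alg" where
  "pres_alg G H q ext =
    \<lparr> lcarrier = {tcls G H q ext t | t. wf_term H (lcarrier G) q t},
      lzero = tcls G H q ext LZero,
      ladd = (\<lambda>X Y. tcls G H q ext (LAdd (trep X) (trep Y))),
      lneg = (\<lambda>X. tcls G H q ext (LNeg (trep X))),
      lsmul = (\<lambda>r X. tcls G H q ext (LSmul r (trep X))),
      lbr = (\<lambda>X Y. tcls G H q ext (LBr (trep X) (trep Y))) \<rparr>"

abbreviation q_tensor where "q_tensor G H q \<equiv> pres_alg G H q False"
abbreviation q_exterior where "q_exterior G H q \<equiv> pres_alg G H q True"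

definition tgen :: "('r::comm_ring_1, 'g) lie_alg \<Rightarrow> 'g set \<Rightarrow> nat \<Rightarrow> bool \<Rightarrow> 'g \<Rightarrow> 'g \<Rightarrow> ('r, 'g) lterm set" where
  "tgen G H q ext h g = tcls G H q ext (Tn h g)"

definition tcurly :: "('r::comm_ring_1, 'g) lie_alg \<Rightarrow> 'g set \<Rightarrow> nat \<Rightarrow> bool \<Rightarrow> 'g \<Rightarrow> ('r, 'g) lterm set" where
  "tcurly G H q ext h = tcls G H q ext (Cu h)"

definition tproj :: "('r::comm_ring_1, 'g) lie_alg \<Rightarrow> 'g set \<Rightarrow> nat \<Rightarrow> ('r, 'g) lterm set \<Rightarrow> ('r, 'g) lterm set" where
  "tproj G H q X = tcls G H q True (trep X)"

end

theory Submission
  imports Defs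
begin

locale lieG =
  fixes L :: "('r::comm_ring_1, 'a) lie_alg"
  assumes LA: "lie_algebra L"
begin

abbreviation "C \<equiv> lcarrier L"
abbreviation "z \<equiv> lzero L"
abbreviation "pl \<equiv> ladd L"
abbreviation "ng \<equiv> lneg L"
abbreviation "sm \<equiv> lsmul L"
abbreviation "br \<equiv> lbr L"

lemmas ax = LA[unfolded lie_algebra_def Let_def]

lemma AX1: "z \<in> C" using ax by (elim conjE) assumption
lemma z_C[simp]: "z \<in> C" by (rule AX1[rule_format])
lemma AX2: "\<forall>x\<in>C. \<forall>y\<in>C. pl x y \<in> C" using ax by (elim conjE) assumption
lemma pl_C[simp]: "x \<in> C \<Longrightarrow> y \<in> C \<Longrightarrow> pl x y \<in> C" by (rule AX2[rule_format])
lemma AX3: "\<forall>x\<in>C. ng x \<in> C" using ax by (elim conjE) assumption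
lemma ng_C[simp]: "x \<in> C \<Longrightarrow> ng x \<in> C" by (rule AX3[rule_format])
lemma AX4: "\<forall>r. \<forall>x\<in>C. sm r x \<in> C" using ax by (elim conjE) assumption
lemma sm_C[simp]: "x \<in> C \<Longrightarrow> sm r x \<in> C" by (rule AX4[rule_format])
lemma AX5: "\<forall>x\<in>C. \<forall>y\<in>C. br x y \<in> C" using ax by (elim conjE) assumption
lemma br_C[simp]: "x \<in> C \<Longrightarrow> y \<in> C \<Longrightarrow> br x y \<in> C" by (rule AX5[rule_format])
lemma AX6: "\<forall>x\<in>C. \<forall>y\<in>C. \<forall>w\<in>C. pl (pl x y) w = pl x (pl y w)" using ax by (elim conjE) assumption
lemma pl_assoc: "x \<in> C \<Longrightarrow> y \<in> C \<Longrightarrow> w \<in> C \<Longrightarrow> pl (pl x y) w = pl x (pl y w)" by (rule AX6[rule_format])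
lemma AX7: "\<forall>x\<in>C. \<forall>y\<in>C. pl x y = pl y x" using ax by (elim conjE) assumption
lemma pl_comm: "x \<in> C \<Longrightarrow> y \<in> C \<Longrightarrow> pl x y = pl y x" by (rule AX7[rule_format])
lemma AX8: "\<forall>x\<in>C. pl z x = x" using ax by (elim conjE) assumption
lemma pl_zl[simp]: "x \<in> C \<Longrightarrow> pl z x = x" by (rule AX8[rule_format])
lemma AX9: "\<forall>x\<in>C. pl (ng x) x = z" using ax by (elim conjE) assumption
lemma pl_negl[simp]: "x \<in> C \<Longrightarrow> pl (ng x) x = z" by (rule AX9[rule_format])
lemma AX10: "\<forall>r s. \<forall>x\<in>C. sm (r + s) x = pl (sm r x) (sm s x)" using ax by (elim conjE) assumption
lemma sm_addsc: "x \<in> C \<Longrightarrow> sm (r + s) x = pl (sm r x) (sm s x)" by (rule AX10[rule_format])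
lemma AX11: "\<forall>r. \<forall>x\<in>C. \<forall>y\<in>C. sm r (pl x y) = pl (sm r x) (sm r y)" using ax by (elim conjE) assumption
lemma sm_add: "x \<in> C \<Longrightarrow> y \<in> C \<Longrightarrow> sm r (pl x y) = pl (sm r x) (sm r y)" by (rule AX11[rule_format])
lemma AX12: "\<forall>r s. \<forall>x\<in>C. sm (r * s) x = sm r (sm s x)" using ax by (elim conjE) assumption
lemma sm_mult: "x \<in> C \<Longrightarrow> sm (r * s) x = sm r (sm s x)" by (rule AX12[rule_format])
lemma AX13: "\<forall>x\<in>C. sm 1 x = x" using ax by (elim conjE) assumption
lemma sm_one[simp]: "x \<in> C \<Longrightarrow> sm 1 x = x" by (rule AX13[rule_format])
lemma AX14: "\<forall>x\<in>C. \<forall>y\<in>C. \<forall>w\<in>C. br (pl x y) w = pl (br x w) (br y w)" using ax by (elim conjE) assumption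
lemma br_addl: "x \<in> C \<Longrightarrow> y \<in> C \<Longrightarrow> w \<in> C \<Longrightarrow> br (pl x y) w = pl (br x w) (br y w)" by (rule AX14[rule_format])
lemma AX15: "\<forall>x\<in>C. \<forall>y\<in>C. \<forall>w\<in>C. br x (pl y w) = pl (br x y) (br x w)" using ax by (elim conjE) assumption
lemma br_addr: "x \<in> C \<Longrightarrow> y \<in> C \<Longrightarrow> w \<in> C \<Longrightarrow> br x (pl y w) = pl (br x y) (br x w)" by (rule AX15[rule_format])
lemma AX16: "\<forall>r. \<forall>x\<in>C. \<forall>y\<in>C. br (sm r x) y = sm r (br x y)" using ax by (elim conjE) assumption
lemma br_sml: "x \<in> C \<Longrightarrow> y \<in> C \<Longrightarrow> br (sm r x) y = sm r (br x y)" by (rule AX16[rule_format])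
lemma AX17: "\<forall>r. \<forall>x\<in>C. \<forall>y\<in>C. br x (sm r y) = sm r (br x y)" using ax by (elim conjE) assumption
lemma br_smr: "x \<in> C \<Longrightarrow> y \<in> C \<Longrightarrow> br x (sm r y) = sm r (br x y)" by (rule AX17[rule_format])
lemma AX18: "\<forall>x\<in>C. br x x = z" using ax by (elim conjE) assumption
lemma br_self[simp]: "x \<in> C \<Longrightarrow> br x x = z" by (rule AX18[rule_format])
lemma AX19: "\<forall>x\<in>C. \<forall>y\<in>C. \<forall>w\<in>C. pl (pl (br x (br y w)) (br y (br w x))) (br w (br x y)) = z" using ax by (elim conjE) assumption
lemma jac: "x \<in> C \<Longrightarrow> y \<in> C \<Longrightarrow> w \<in> C \<Longrightarrow> pl (pl (br x (br y w)) (br y (br w x))) (br w (br x y)) = z" by (rule AX19[rule_format])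

lemma pl_zr[simp]: "x \<in> C \<Longrightarrow> pl x z = x" using pl_comm[of x z] by simp
lemma pl_negr[simp]: "x \<in> C \<Longrightarrow> pl x (ng x) = z" using pl_comm[of x "ng x"] by simp

lemma cancel_r: assumes "x \<in> C" "y \<in> C" "w \<in> C" "pl x w = pl y w" shows "x = y"
proof -
  have "x = pl (pl x w) (ng w)" using assms(1,3) by (simp add: pl_assoc)
  also have "\<dots> = pl (pl y w) (ng w)" using assms by simp
  also have "\<dots> = y" using assms(2,3) by (simp add: pl_assoc)
  finally show ?thesis .
qed

lemma neg_unique: assumes "x \<in> C" "y \<in> C" "pl x y = z" shows "y = ng x"
proof -
  have "ng x = pl (ng x) (pl x y)" using assms by simp
  also have "\<dots> = y" using assms(1,2) by (simp flip: pl_assoc)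
  finally show ?thesis by simp
qed

lemma sm0[simp]: assumes "x \<in> C" shows "sm 0 x = z"
proof -
  have e: "sm 0 x = pl (sm 0 x) (sm 0 x)" using sm_addsc[OF assms, of 0 0] by (metis add_0_right)
  have f: "pl z (sm 0 x) = sm 0 x" using assms by simp
  have "pl (sm 0 x) (sm 0 x) = pl z (sm 0 x)" unfolding f by (rule e[symmetric])
  then show ?thesis by (rule cancel_r[OF sm_C[OF assms] z_C sm_C[OF assms]])
qed

lemma ng_sm: assumes "x \<in> C" shows "ng x = sm (-1) x"
proof -
  have "pl x (sm (-1) x) = z" using assms sm_addsc[of x 1 "-1"] by simp
  then show ?thesis using assms neg_unique[of x "sm (-1) x"] by simp
qed

lemma smz[simp]: "sm r z = z"
  using sm_mult[of z r 0] by simp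

lemma br_zr[simp]: "x \<in> C \<Longrightarrow> br x z = z" using br_smr[of x z 0] by simp
lemma br_zl[simp]: "x \<in> C \<Longrightarrow> br z x = z" using br_sml[of z x 0] by simp

lemma ng_ng[simp]: "x \<in> C \<Longrightarrow> ng (ng x) = x"
  using neg_unique[of "ng x" x] pl_negl[of x] by simp

lemma ng_pl: assumes "x \<in> C" "y \<in> C" shows "ng (pl x y) = pl (ng x) (ng y)"
  using assms by (simp add: ng_sm sm_add)

lemma antisym: assumes "x \<in> C" "y \<in> C" shows "br x y = ng (br y x)"
proof -
  have "z = br (pl x y) (pl x y)" using assms by simp
  also have "\<dots> = pl (br x (pl x y)) (br y (pl x y))" using assms by (intro br_addl) auto
  also have "\<dots> = pl (pl (br x x) (br x y)) (pl (br y x) (br y y))"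
    using assms by (simp only: br_addr)
  also have "\<dots> = pl (br x y) (br y x)" using assms by simp
  finally have "z = pl (br x y) (br y x)" .
  then have "pl (br y x) (br x y) = z" using assms pl_comm[of "br x y" "br y x"] br_C by metis
  then show ?thesis using assms by (intro neg_unique) auto
qed

lemma br_ngr: "x \<in> C \<Longrightarrow> y \<in> C \<Longrightarrow> br x (ng y) = ng (br x y)"
  by (simp add: ng_sm br_smr)
lemma br_ngl: "x \<in> C \<Longrightarrow> y \<in> C \<Longrightarrow> br (ng x) y = ng (br x y)"
  by (simp add: ng_sm br_sml)

lemma G_rel4: assumes "h \<in> C" "h' \<in> C" "g \<in> C"
  shows "br (br h h') g = pl (br h (br h' g)) (ng (br h' (br h g)))"
proof -
  let ?A = "br h (br h' g)" and ?B = "br h' (br g h)" and ?D = "br g (br h h')"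
  have j: "pl (pl ?A ?B) ?D = z" using assms jac by blast
  have "?D = ng (pl ?A ?B)" using j assms by (intro neg_unique) (auto simp: pl_comm)
  hence "br (br h h') g = pl ?A ?B" using assms antisym[of "br h h'" g] by simp
  also have "?B = ng (br h' (br h g))" using assms antisym[of g h] by (simp add: br_ngr)
  finally show ?thesis .
qed

lemma G_rel5: assumes "h \<in> C" "g \<in> C" "g' \<in> C"
  shows "br h (br g g') = pl (br (br g' h) g) (ng (br (br g h) g'))"
proof -
  let ?A = "br h (br g g')" and ?B = "br g (br g' h)" and ?D = "br g' (br h g)"
  have j: "pl ?A (pl ?B ?D) = z" using assms jac[of h g g'] by (simp add: pl_assoc)
  have "pl ?A (pl ?B ?D) = pl (pl ?B ?D) ?A" using assms by (simp add: pl_comm)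
  hence "?A = ng (pl ?B ?D)" using j assms by (intro neg_unique) auto
  also have "\<dots> = pl (ng ?B) (ng ?D)" using assms by (simp add: ng_pl)
  also have "ng ?B = br (br g' h) g" using assms antisym[of "br g' h" g] by simp
  also have "ng ?D = ng (br (br g h) g')"
    using assms antisym[of g' "br h g"] antisym[of h g] by (simp add: br_ngr br_ngl)
  finally show ?thesis .
qed

lemma G_rel7: assumes "x \<in> C" "h \<in> C" "g \<in> C"
  shows "br x (br h g) = pl (br (br x h) g) (br h (br x g))"
proof -
  let ?A = "br x (br h g)" and ?B = "br h (br g x)" and ?D = "br g (br x h)"
  have j: "pl ?A (pl ?B ?D) = z" using assms jac[of x h g] by (simp add: pl_assoc)
  have "pl ?A (pl ?B ?D) = pl (pl ?B ?D) ?A" using assms by (simp add: pl_comm)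
  hence "?A = ng (pl ?B ?D)" using j assms by (intro neg_unique) auto
  also have "\<dots> = pl (ng ?D) (ng ?B)" using assms by (simp add: ng_pl pl_comm)
  also have "ng ?D = br (br x h) g" using assms antisym[of "br x h" g] by simp
  also have "ng ?B = br h (br x g)" using assms antisym[of g x] by (simp add: br_ngr)
  finally show ?thesis .
qed

lemma G_rel8: assumes "h \<in> C" "h' \<in> C"
  shows "sm q (pl (sm r h) (sm s h')) = pl (sm r (sm q h)) (sm s (sm q h'))"
  using assms by (simp add: sm_add flip: sm_mult) (simp add: mult.commute)

end
fun ev :: "('r::comm_ring_1, 'g) lie_alg \<Rightarrow> nat \<Rightarrow> ('r, 'g) lterm \<Rightarrow> 'g" where
  "ev L q (Tn h g) = lbr L h g"
| "ev L q (Cu h) = lsmul L (of_nat q) h"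
| "ev L q LZero = lzero L"
| "ev L q (LAdd a b) = ladd L (ev L q a) (ev L q b)"
| "ev L q (LNeg a) = lneg L (ev L q a)"
| "ev L q (LSmul r a) = lsmul L r (ev L q a)"
| "ev L q (LBr a b) = lbr L (ev L q a) (ev L q b)"

fun lin :: "('r, 'g) lterm \<Rightarrow> bool" where
  "lin (Tn h g) = True"
| "lin (Cu h) = True"
| "lin LZero = True"
| "lin (LAdd a b) = (lin a \<and> lin b)"
| "lin (LNeg a) = lin a"
| "lin (LSmul r a) = lin a"
| "lin (LBr a b) = False"

fun isgen :: "('r, 'g) lterm \<Rightarrow> bool" where
  "isgen (Tn h g) = True"
| "isgen (Cu h) = True"
| "isgen _ = False"

locale ts = lieG L for L :: "('r::comm_ring_1, 'a) lie_alg" +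
  fixes H :: "'a set" and q :: nat and ext :: bool
  assumes ideal: "lie_ideal L H"
begin

abbreviation E where "E a b \<equiv> teq L H q ext a b"
abbreviation W where "W a \<equiv> wf_term H C q a"
abbreviation EV where "EV t \<equiv> ev L q t"

lemma H_C[simp]: "x \<in> H \<Longrightarrow> x \<in> C" using ideal unfolding lie_ideal_def by blast
lemma z_H[simp]: "z \<in> H" using ideal unfolding lie_ideal_def by blast
lemma pl_H[simp]: "x \<in> H \<Longrightarrow> y \<in> H \<Longrightarrow> pl x y \<in> H" using ideal unfolding lie_ideal_def by blast
lemma ng_H[simp]: "x \<in> H \<Longrightarrow> ng x \<in> H" using ideal unfolding lie_ideal_def by blast
lemma sm_H[simp]: "x \<in> H \<Longrightarrow> sm r x \<in> H" using ideal unfolding lie_ideal_def by blast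
lemma br_H[simp]: "x \<in> H \<Longrightarrow> y \<in> C \<Longrightarrow> br x y \<in> H" using ideal unfolding lie_ideal_def by blast
lemma br_H2[simp]: "x \<in> C \<Longrightarrow> y \<in> H \<Longrightarrow> br x y \<in> H" using antisym[of x y] by simp

lemma ev_H: "W t \<Longrightarrow> EV t \<in> H"
  by (induction t) auto
lemma ev_C[simp]: "W t \<Longrightarrow> EV t \<in> C"
  using ev_H H_C by blast

lemma teq_wf: "E a b \<Longrightarrow> W a \<and> W b"
  by (induction rule: teq.induct) auto

lemma teq_ev: "E a b \<Longrightarrow> EV a = EV b"
proof (induction rule: teq.induct)
  case (add_assoc a b c) then show ?case by (simp add: pl_assoc)
next
  case (add_comm a b) then show ?case by (simp add: pl_comm)
next
  case (smul_add_scalar a r s) then show ?case by (simp add: sm_addsc)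
next
  case (smul_add a b r) then show ?case by (simp add: sm_add)
next
  case (smul_mult a r s) then show ?case by (simp add: sm_mult)
next
  case (br_add_left a b c) then show ?case by (simp add: br_addl)
next
  case (br_add_right a b c) then show ?case by (simp add: br_addr)
next
  case (br_smul_left a b r) then show ?case by (simp add: br_sml)
next
  case (br_smul_right a b r) then show ?case by (simp add: br_smr)
next
  case (jacobi a b c) then show ?case by (simp add: jac)
next
  case (rel1a h g r) then show ?case by (simp add: br_sml)
next
  case (rel1b h g r) then show ?case by (simp add: br_smr)
next
  case (rel2 h h' g) then show ?case by (simp add: br_addl)
next
  case (rel3 h g g') then show ?case by (simp add: br_addr)
next
  case (rel4 h h' g) then show ?case using G_rel4[of h h' g] by simp
next
  case (rel5 h g g') then show ?case using G_rel5[of h g g'] by simp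
next
  case (rel7 h h' g) then show ?case using G_rel7[of "sm (of_nat q) h'" h g] by simp
next
  case (rel8 h h' r s) then show ?case by (simp add: G_rel8)
qed auto

declare teq.trans[trans]

lemma Erefl: "W a \<Longrightarrow> E a a" by (rule teq.refl)
lemma Esym: "E a b \<Longrightarrow> E b a" by (rule teq.sym)

lemma T_zr: assumes "W a" shows "E (LAdd a LZero) a"
proof -
  have "E (LAdd a LZero) (LAdd LZero a)" using assms by (intro teq.add_comm) auto
  also have "E \<dots> a" using assms by (rule teq.add_zero)
  finally show ?thesis .
qed

lemma T_negr: assumes "W a" shows "E (LAdd a (LNeg a)) LZero"
proof -
  have "E (LAdd a (LNeg a)) (LAdd (LNeg a) a)" using assms by (intro teq.add_comm) auto
  also have "E \<dots> LZero" using assms by (rule teq.add_neg)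
  finally show ?thesis .
qed

lemma T_cancel: assumes "W a" "W b" "W c" "E (LAdd a c) (LAdd b c)" shows "E a b"
proof -
  have "E a (LAdd a LZero)" using assms by (intro Esym[OF T_zr])
  also have "E \<dots> (LAdd a (LAdd c (LNeg c)))" using assms
    by (intro teq.cong_add Erefl Esym[OF T_negr]) auto
  also have "E \<dots> (LAdd (LAdd a c) (LNeg c))" using assms
    by (intro Esym[OF teq.add_assoc]) auto
  also have "E \<dots> (LAdd (LAdd b c) (LNeg c))"
    by (rule teq.cong_add[OF assms(4) Erefl]) (use assms in simp)
  also have "E \<dots> (LAdd b (LAdd c (LNeg c)))" using assms
    by (intro teq.add_assoc) auto
  also have "E \<dots> (LAdd b LZero)" using assms
    by (intro teq.cong_add Erefl T_negr) auto
  also have "E \<dots> b" using assms by (intro T_zr)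
  finally show ?thesis .
qed

lemma T_sm0: assumes "W a" shows "E (LSmul 0 a) LZero"
proof -
  have "E (LAdd (LSmul 0 a) (LSmul 0 a)) (LAdd LZero (LSmul 0 a))"
  proof -
    have "E (LAdd (LSmul 0 a) (LSmul 0 a)) (LSmul (0 + 0) a)"
      using assms by (intro Esym[OF teq.smul_add_scalar])
    also have "E \<dots> (LSmul 0 a)" using assms by (simp add: Erefl)
    also have "E \<dots> (LAdd LZero (LSmul 0 a))" using assms by (intro Esym[OF teq.add_zero]) auto
    finally show ?thesis .
  qed
  note eq = this
  show ?thesis by (rule T_cancel[OF _ _ _ eq]) (use assms in auto)
qed

lemma T_negm1: assumes "W a" shows "E (LNeg a) (LSmul (-1) a)"
proof -
  have "E (LAdd (LSmul (-1) a) a) (LAdd (LNeg a) a)"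
  proof -
    have "E (LAdd (LSmul (-1) a) a) (LAdd (LSmul (-1) a) (LSmul 1 a))"
      using assms by (intro teq.cong_add Erefl Esym[OF teq.smul_one]) auto
    also have "E \<dots> (LSmul (-1 + 1) a)" using assms by (intro Esym[OF teq.smul_add_scalar])
    also have "E \<dots> LZero" using assms T_sm0 by simp
    also have "E \<dots> (LAdd (LNeg a) a)" using assms by (intro Esym[OF teq.add_neg])
    finally show ?thesis .
  qed
  note eq = this
  show ?thesis by (rule Esym, rule T_cancel[OF _ _ _ eq]) (use assms in auto)
qed

lemma T_smz: "E (LSmul r LZero) LZero"
proof -
  have "E (LSmul r LZero) (LSmul r (LSmul 0 LZero))" by (intro teq.cong_smul Esym[OF T_sm0]) auto
  also have "E \<dots> (LSmul (r * 0) LZero)" by (intro Esym[OF teq.smul_mult]) auto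
  also have "E \<dots> LZero" using T_sm0[of LZero] by simp
  finally show ?thesis .
qed

lemma T_brzr: assumes "W a" shows "E (LBr a LZero) LZero"
proof -
  have "E (LBr a LZero) (LBr a (LSmul 0 LZero))" using assms by (intro teq.cong_br Erefl Esym[OF T_sm0]) auto
  also have "E \<dots> (LSmul 0 (LBr a LZero))" using assms by (intro teq.br_smul_right) auto
  also have "E \<dots> LZero" using assms by (intro T_sm0) auto
  finally show ?thesis .
qed

lemma T_brnegr: assumes "W a" "W b" shows "E (LBr a (LNeg b)) (LNeg (LBr a b))"
proof -
  have "E (LBr a (LNeg b)) (LBr a (LSmul (-1) b))" using assms by (intro teq.cong_br Erefl T_negm1) auto
  also have "E \<dots> (LSmul (-1) (LBr a b))" using assms by (intro teq.br_smul_right) auto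
  also have "E \<dots> (LNeg (LBr a b))" using assms by (intro Esym[OF T_negm1]) auto
  finally show ?thesis .
qed

lemma T_brzl: assumes "W a" shows "E (LBr LZero a) LZero"
proof -
  have "E (LBr LZero a) (LBr (LSmul 0 LZero) a)" using assms by (intro teq.cong_br Erefl Esym[OF T_sm0]) auto
  also have "E \<dots> (LSmul 0 (LBr LZero a))" using assms by (intro teq.br_smul_left) auto
  also have "E \<dots> LZero" using assms by (intro T_sm0) auto
  finally show ?thesis .
qed

lemma T_brnegl: assumes "W a" "W b" shows "E (LBr (LNeg a) b) (LNeg (LBr a b))"
proof -
  have "E (LBr (LNeg a) b) (LBr (LSmul (-1) a) b)" using assms by (intro teq.cong_br Erefl T_negm1) auto
  also have "E \<dots> (LSmul (-1) (LBr a b))" using assms by (intro teq.br_smul_left) auto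
  also have "E \<dots> (LNeg (LBr a b))" using assms by (intro Esym[OF T_negm1]) auto
  finally show ?thesis .
qed

lemma T_antisym: assumes "W a" "W b" shows "E (LBr a b) (LNeg (LBr b a))"
proof -
  have "E (LAdd (LBr a b) (LBr b a)) (LAdd (LNeg (LBr b a)) (LBr b a))"
  proof -
    have "E (LAdd (LBr a b) (LBr b a)) (LAdd (LAdd LZero (LBr a b)) (LAdd (LBr b a) LZero))"
      using assms by (intro teq.cong_add Esym[OF T_zr] Esym[OF teq.add_zero]) auto
    also have "E \<dots> (LAdd (LAdd (LBr a a) (LBr a b)) (LAdd (LBr b a) (LBr b b)))"
      using assms by (intro teq.cong_add Esym[OF teq.br_alt] Erefl) auto
    also have "E \<dots> (LAdd (LBr a (LAdd a b)) (LBr b (LAdd a b)))"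
      using assms by (intro teq.cong_add Esym[OF teq.br_add_right]) auto
    also have "E \<dots> (LBr (LAdd a b) (LAdd a b))"
      using assms by (intro Esym[OF teq.br_add_left]) auto
    also have "E \<dots> LZero" using assms by (intro teq.br_alt) auto
    also have "E \<dots> (LAdd (LNeg (LBr b a)) (LBr b a))" using assms by (intro Esym[OF teq.add_neg]) auto
    finally show ?thesis .
  qed
  note eq = this
  show ?thesis by (rule T_cancel[OF _ _ _ eq]) (use assms in auto)
qed


lemma exI_lin: "E x c \<Longrightarrow> lin c \<Longrightarrow> \<exists>c. lin c \<and> E x c" by blast

lemma br_gen: assumes "isgen a" "isgen b" "W a" "W b"
  shows "\<exists>c. lin c \<and> E (LBr a b) c"
proof (cases a)
  case (Tn h g)
  show ?thesis
  proof (cases b)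
    case (Tn h' g')
    have "E (LBr a b) (Tn (br h g) (br h' g'))" using \<open>a = Tn h g\<close> Tn assms(3,4)
      by (simp add: teq.rel6)
    then show ?thesis by (intro exI[of _ "Tn (br h g) (br h' g')"]) simp
  next
    case (Cu h')
    have "E (LBr a b) (LNeg (LBr b a))" using assms by (intro T_antisym)
    also have "E \<dots> (LNeg (LAdd (Tn (br (sm (of_nat q) h') h) g) (Tn h (br (sm (of_nat q) h') g))))"
      using assms(3,4) Cu Tn by (intro teq.cong_neg) (simp add: teq.rel7)
    finally show ?thesis by (rule exI_lin) simp
  qed (use assms(2) in simp_all)
next
  case (Cu h')
  show ?thesis
  proof (cases b)
    case (Tn h g)
    have "E (LBr a b) (LAdd (Tn (br (sm (of_nat q) h') h) g) (Tn h (br (sm (of_nat q) h') g)))"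
      using assms(3,4) Cu Tn by (simp add: teq.rel7)
    then show ?thesis by (rule exI_lin) simp
  next
    case (Cu h)
    have "E (LBr a b) (Tn (sm (of_nat q) h') (sm (of_nat q) h))"
      using assms(3,4) \<open>a = Cu h'\<close> Cu by (simp add: teq.rel9)
    then show ?thesis by (rule exI_lin) simp
  qed (use assms(2) in simp_all)
qed (use assms(1) in simp_all)

lemma br_lin_r: "lin b \<Longrightarrow> W b \<Longrightarrow> W a \<Longrightarrow> isgen a \<Longrightarrow> \<exists>c. lin c \<and> E (LBr a b) c"
proof (induction b)
  case LZero then show ?case using T_brzr by (intro exI[of _ LZero]) auto
next
  case (LAdd b1 b2)
  then obtain c1 c2 where c: "lin c1" "E (LBr a b1) c1" "lin c2" "E (LBr a b2) c2" by auto
  have "E (LBr a (LAdd b1 b2)) (LAdd (LBr a b1) (LBr a b2))" using LAdd.prems by (intro teq.br_add_right) auto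
  also have "E \<dots> (LAdd c1 c2)" using c by (intro teq.cong_add)
  finally show ?case using c by (intro exI[of _ "LAdd c1 c2"]) auto
next
  case (LNeg b1)
  then obtain c1 where c: "lin c1" "E (LBr a b1) c1" by auto
  have "E (LBr a (LNeg b1)) (LNeg (LBr a b1))" using LNeg.prems by (intro T_brnegr) auto
  also have "E \<dots> (LNeg c1)" using c by (intro teq.cong_neg)
  finally show ?case using c by (intro exI[of _ "LNeg c1"]) auto
next
  case (LSmul r b1)
  then obtain c1 where c: "lin c1" "E (LBr a b1) c1" by auto
  have "E (LBr a (LSmul r b1)) (LSmul r (LBr a b1))" using LSmul.prems by (intro teq.br_smul_right) auto
  also have "E \<dots> (LSmul r c1)" using c by (intro teq.cong_smul)
  finally show ?case using c by (intro exI[of _ "LSmul r c1"]) auto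
next
  case (Tn h g) then show ?case by (intro br_gen) simp_all
next
  case (Cu h) then show ?case by (intro br_gen) simp_all
qed simp

lemma br_lin: "lin a \<Longrightarrow> W a \<Longrightarrow> W b \<Longrightarrow> lin b \<Longrightarrow> \<exists>c. lin c \<and> E (LBr a b) c"
proof (induction a)
  case LZero then show ?case using T_brzl by (intro exI[of _ LZero]) auto
next
  case (LAdd b1 b2)
  then obtain c1 c2 where c: "lin c1" "E (LBr b1 b) c1" "lin c2" "E (LBr b2 b) c2" by auto
  have "E (LBr (LAdd b1 b2) b) (LAdd (LBr b1 b) (LBr b2 b))" using LAdd.prems by (intro teq.br_add_left) auto
  also have "E \<dots> (LAdd c1 c2)" using c by (intro teq.cong_add)
  finally show ?case using c by (intro exI[of _ "LAdd c1 c2"]) auto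
next
  case (LNeg b1)
  then obtain c1 where c: "lin c1" "E (LBr b1 b) c1" by auto
  have "E (LBr (LNeg b1) b) (LNeg (LBr b1 b))" using LNeg.prems by (intro T_brnegl) auto
  also have "E \<dots> (LNeg c1)" using c by (intro teq.cong_neg)
  finally show ?case using c by (intro exI[of _ "LNeg c1"]) auto
next
  case (LSmul r b1)
  then obtain c1 where c: "lin c1" "E (LBr b1 b) c1" by auto
  have "E (LBr (LSmul r b1) b) (LSmul r (LBr b1 b))" using LSmul.prems by (intro teq.br_smul_left) auto
  also have "E \<dots> (LSmul r c1)" using c by (intro teq.cong_smul)
  finally show ?case using c by (intro exI[of _ "LSmul r c1"]) auto
next
  case (Tn h g) then show ?case by (intro br_lin_r) simp_all
next
  case (Cu h) then show ?case by (intro br_lin_r) simp_all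
qed auto

lemma to_lin: "W t \<Longrightarrow> \<exists>c. lin c \<and> E t c"
proof (induction t)
  case (LBr a b)
  then obtain a' b' where ab: "lin a'" "E a a'" "lin b'" "E b b'" by auto
  then have w: "W a'" "W b'" using teq_wf by blast+
  obtain c where c: "lin c" "E (LBr a' b') c" using br_lin[OF ab(1) w(1) w(2) ab(3)] by blast
  have "E (LBr a b) (LBr a' b')" using ab by (intro teq.cong_br)
  also note c(2)
  finally show ?case using c by blast
next
  case (Tn h g) then show ?case by (intro exI[of _ "Tn h g"]) (auto intro: Erefl)
next
  case (Cu h) then show ?case by (intro exI[of _ "Cu h"]) (auto intro: Erefl)
next
  case LZero then show ?case by (intro exI[of _ LZero]) (auto intro: Erefl)
next
  case (LAdd a b)
  then obtain a' b' where ab: "lin a'" "E a a'" "lin b'" "E b b'" by auto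
  then show ?case by (intro exI[of _ "LAdd a' b'"]) (auto intro: teq.cong_add)
next
  case (LNeg a)
  then obtain a' where ab: "lin a'" "E a a'" by auto
  then show ?case by (intro exI[of _ "LNeg a'"]) (auto intro: teq.cong_neg)
next
  case (LSmul r a)
  then obtain a' where ab: "lin a'" "E a a'" by auto
  then show ?case by (intro exI[of _ "LSmul r a'"]) (auto intro: teq.cong_smul)
qed

lemma cu_sm: assumes "1 \<le> q" "h \<in> H" shows "E (Cu (sm r h)) (LSmul r (Cu h))"
proof -
  have "Cu (sm r h) = Cu (pl (sm r h) (sm 0 h))" using assms by simp
  also have "E \<dots> (LAdd (LSmul r (Cu h)) (LSmul 0 (Cu h)))" using assms by (intro teq.rel8)
  also have "E \<dots> (LAdd (LSmul r (Cu h)) LZero)" using assms by (intro teq.cong_add Erefl T_sm0) auto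
  also have "E \<dots> (LSmul r (Cu h))" using assms by (intro T_zr) auto
  finally show ?thesis .
qed

lemma curly: "lin t \<Longrightarrow> W t \<Longrightarrow> 1 \<le> q \<Longrightarrow> E (Cu (EV t)) (LSmul (of_nat q) t)"
proof (induction t)
  case (Tn h g) then show ?case by (auto intro: teq.rel10)
next
  case (Cu h) then show ?case by (auto intro: cu_sm)
next
  case LZero
  have "Cu z = Cu (sm 0 z)" by simp
  also have "E \<dots> (LSmul 0 (Cu z))" using LZero by (intro cu_sm) auto
  also have "E \<dots> LZero" using LZero by (intro T_sm0) auto
  also have "E \<dots> (LSmul (of_nat q) LZero)" by (intro Esym[OF T_smz])
  finally show ?case by simp
next
  case (LAdd a b)
  have "Cu (EV (LAdd a b)) = Cu (pl (sm 1 (EV a)) (sm 1 (EV b)))" using LAdd by simp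
  also have "E \<dots> (LAdd (LSmul 1 (Cu (EV a))) (LSmul 1 (Cu (EV b))))" using LAdd by (intro teq.rel8 ev_H) auto
  also have "E \<dots> (LAdd (Cu (EV a)) (Cu (EV b)))" using LAdd by (intro teq.cong_add teq.smul_one) (auto intro: ev_H)
  also have "E \<dots> (LAdd (LSmul (of_nat q) a) (LSmul (of_nat q) b))" using LAdd by (intro teq.cong_add) auto
  also have "E \<dots> (LSmul (of_nat q) (LAdd a b))" using LAdd by (intro Esym[OF teq.smul_add]) auto
  finally show ?case .
next
  case (LNeg a)
  have "Cu (EV (LNeg a)) = Cu (sm (-1) (EV a))" using LNeg by (simp add: ng_sm)
  also have "E \<dots> (LSmul (-1) (Cu (EV a)))" using LNeg by (intro cu_sm ev_H) auto
  also have "E \<dots> (LSmul (-1) (LSmul (of_nat q) a))" using LNeg by (intro teq.cong_smul) auto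
  also have "E \<dots> (LSmul ((-1) * of_nat q) a)" using LNeg by (intro Esym[OF teq.smul_mult]) auto
  also have "(-1) * of_nat q = of_nat q * (-1 :: 'r)" by simp
  also have "E (LSmul \<dots> a) (LSmul (of_nat q) (LSmul (-1) a))" using LNeg by (intro teq.smul_mult) auto
  also have "E \<dots> (LSmul (of_nat q) (LNeg a))" using LNeg by (intro teq.cong_smul Esym[OF T_negm1]) auto
  finally show ?case .
next
  case (LSmul r a)
  have "Cu (EV (LSmul r a)) = Cu (sm r (EV a))" by simp
  also have "E \<dots> (LSmul r (Cu (EV a)))" using LSmul by (intro cu_sm ev_H) auto
  also have "E \<dots> (LSmul r (LSmul (of_nat q) a))" using LSmul by (intro teq.cong_smul) auto
  also have "E \<dots> (LSmul (r * of_nat q) a)" using LSmul by (intro Esym[OF teq.smul_mult]) auto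
  also have "r * of_nat q = of_nat q * r" by (simp add: mult.commute)
  also have "E (LSmul \<dots> a) (LSmul (of_nat q) (LSmul r a))" using LSmul by (intro teq.smul_mult) auto
  finally show ?case .
qed auto


abbreviation P where "P \<equiv> pres_alg L H q ext"
abbreviation TC where "TC t \<equiv> tcls L H q ext t"

lemma trep_tcls: assumes "W t" shows "E (trep (TC t)) t"
proof -
  have "t \<in> TC t" using assms by (simp add: tcls_def Erefl)
  then have "trep (TC t) \<in> TC t" unfolding trep_def by (rule someI)
  then show ?thesis by (simp add: tcls_def)
qed

lemma tcls_eq: assumes "E a b" shows "TC a = TC b"
proof (rule set_eqI)
  fix s
  show "s \<in> TC a \<longleftrightarrow> s \<in> TC b"
    unfolding tcls_def using assms teq.trans[of L H q ext s a b] teq.trans[of L H q ext s b a] Esym[OF assms]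
    by auto
qed

lemma ev_trep: "W t \<Longrightarrow> EV (trep (TC t)) = EV t"
  using teq_ev trep_tcls by blast

lemma car_iff: "X \<in> lcarrier P \<longleftrightarrow> (\<exists>t. W t \<and> X = TC t)"
  by (auto simp: pres_alg_def)

lemma car_W: assumes "X \<in> lcarrier P" shows "W (trep X)"
proof -
  obtain t where t: "W t" "X = TC t" using assms car_iff by blast
  then show ?thesis using trep_tcls teq_wf by blast
qed

lemma ev_trep2: "X \<in> lcarrier P \<Longrightarrow> EV (trep (TC (trep X))) = EV (trep X)"
  using car_W ev_trep by blast

lemma hom: "lie_hom P L (\<lambda>X. EV (trep X))"
  unfolding lie_hom_def
proof (intro conjI ballI allI)
  show "(\<lambda>X. EV (trep X)) ` lcarrier P \<subseteq> C" using car_W ev_C by blast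
next
  fix X Y assume "X \<in> lcarrier P" "Y \<in> lcarrier P"
  then have w: "W (trep X)" "W (trep Y)" using car_W by blast+
  show "EV (trep (ladd P X Y)) = pl (EV (trep X)) (EV (trep Y))"
    using ev_trep[of "LAdd (trep X) (trep Y)"] w by (simp add: pres_alg_def)
  show "EV (trep (lbr P X Y)) = br (EV (trep X)) (EV (trep Y))"
    using ev_trep[of "LBr (trep X) (trep Y)"] w by (simp add: pres_alg_def)
next
  fix r X assume "X \<in> lcarrier P"
  then have w: "W (trep X)" using car_W by blast
  show "EV (trep (lsmul P r X)) = sm r (EV (trep X))"
    using ev_trep[of "LSmul r (trep X)"] w by (simp add: pres_alg_def)
qed

lemma img_H: "X \<in> lcarrier P \<Longrightarrow> EV (trep X) \<in> H"
  using car_W ev_H by blast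

lemma curly_main: assumes "1 \<le> q" "X \<in> lcarrier P"
  shows "tcls L H q ext (Cu (EV (trep X))) = lsmul P (of_nat q) X"
proof -
  have w: "W (trep X)" using assms car_W by blast
  obtain c where c: "lin c" "E (trep X) c" using to_lin[OF w] by blast
  have wc: "W c" using c teq_wf by blast
  have "EV (trep X) = EV c" using c teq_ev by blast
  then have "Cu (EV (trep X)) = Cu (EV c)" by simp
  also have "E \<dots> (LSmul (of_nat q) c)" using curly c wc assms by blast
  also have "E \<dots> (LSmul (of_nat q) (trep X))" by (rule teq.cong_smul[OF Esym[OF c(2)]])
  finally have "TC (Cu (EV (trep X))) = TC (LSmul (of_nat q) (trep X))" by (rule tcls_eq)
  then show ?thesis by (simp add: pres_alg_def)
qed

end

theorem lemma2p4:
  fixes G :: "('r::comm_ring_1, 'g) lie_alg" and H :: "'g set" and q :: nat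
  assumes "lie_algebra G" and "lie_ideal G H"
  shows "\<exists>\<xi>t \<xi>w.
     lie_hom (q_tensor G H q) G \<xi>t \<and>
     (\<forall>h\<in>H. \<forall>g\<in>lcarrier G. \<xi>t (tgen G H q False h g) = lbr G h g) \<and>
     (1 \<le> q \<longrightarrow> (\<forall>h\<in>H. \<xi>t (tcurly G H q False h) = lsmul G (of_nat q) h)) \<and>
     lie_hom (q_exterior G H q) G \<xi>w \<and>
     (\<forall>x\<in>lcarrier (q_tensor G H q). \<xi>w (tproj G H q x) = \<xi>t x) \<and>
     (1 \<le> q \<longrightarrow>
        \<xi>t ` lcarrier (q_tensor G H q) \<subseteq> H \<and>
        \<xi>w ` lcarrier (q_exterior G H q) \<subseteq> H \<and>
        (\<forall>x\<in>lcarrier (q_tensor G H q).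
            tcurly G H q False (\<xi>t x) = lsmul (q_tensor G H q) (of_nat q) x) \<and>
        (\<forall>x\<in>lcarrier (q_exterior G H q).
            tcurly G H q True (\<xi>w x) = lsmul (q_exterior G H q) (of_nat q) x))"
proof -
  have tF: "ts G H"
    using assms by (simp add: ts_def ts_axioms_def lieG_def)
  let ?xi = "\<lambda>X. ev G q (trep X)"
  show ?thesis
  proof (intro exI[of _ ?xi] conjI impI ballI)
    show "lie_hom (q_tensor G H q) G ?xi" by (rule ts.hom[OF tF])
    show "lie_hom (q_exterior G H q) G ?xi" by (rule ts.hom[OF tF])
  next
    fix h g assume "h \<in> H" "g \<in> lcarrier G"
    then show "?xi (tgen G H q False h g) = lbr G h g"
      using ts.ev_trep[OF tF, where q=q and ext=False and t="Tn h g"] by (simp add: tgen_def)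
  next
    fix h assume "1 \<le> q" "h \<in> H"
    then show "?xi (tcurly G H q False h) = lsmul G (of_nat q) h"
      using ts.ev_trep[OF tF, where q=q and ext=False and t="Cu h"] by (simp add: tcurly_def)
  next
    fix x assume "x \<in> lcarrier (q_tensor G H q)"
    then have "wf_term H (lcarrier G) q (trep x)" by (rule ts.car_W[OF tF])
    then show "?xi (tproj G H q x) = ?xi x"
      unfolding tproj_def by (rule ts.ev_trep[OF tF])
  next
    assume "1 \<le> q"
    show "?xi ` lcarrier (q_tensor G H q) \<subseteq> H" using ts.img_H[OF tF] by blast
    show "?xi ` lcarrier (q_exterior G H q) \<subseteq> H" using ts.img_H[OF tF] by blast
  next
    fix x assume "1 \<le> q" "x \<in> lcarrier (q_tensor G H q)"
    then show "tcurly G H q False (?xi x) = lsmul (q_tensor G H q) (of_nat q) x"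
      unfolding tcurly_def by (rule ts.curly_main[OF tF])
  next
    fix x assume "1 \<le> q" "x \<in> lcarrier (q_exterior G H q)"
    then show "tcurly G H q True (?xi x) = lsmul (q_exterior G H q) (of_nat q) x"
      unfolding tcurly_def by (rule ts.curly_main[OF tF])
  qed
qed

end
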